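(* For half-spaces in $\mathbb{R}^5$ we have $\chi_{\rm big}=\infty$: for every positive integers $k$ and $m$ there is a finite point set $P\subset\mathbb{R}^5$ such that for every coloring of $P$ with $k$ colors some half-space contains at least $m$ points of $P$, all of the same color. *)

theory Defs
  imports "HOL-Analysis.Analysis"
begin

definition halfspace :: "'a::real_inner set \<Rightarrow> bool" where
  "halfspace H \<longleftrightarrow> (\<exists>a b. a \<noteq> 0 \<and> H = {x. inner a x \<le> b})"

end

theory Submission
  imports Defs
begin


datatype node = Nd "node list"

fun kids :: "node \<Rightarrow> node list" where "kids (Nd L) = L"

definition cn :: "node \<Rightarrow> node \<Rightarrow> node" where "cn u x = Nd (u # kids x)"

abbreviation rt :: node where "rt \<equiv> Nd []"

lemma Nd_kids: "Nd (kids x) = x" by (cases x) auto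

lemma cn_inj[simp]: "cn u x = cn u' x' \<longleftrightarrow> u = u' \<and> x = x'"
  unfolding cn_def by (metis Nd_kids list.inject node.inject)

lemma cn_ne_rt[simp]: "cn u x \<noteq> rt" "rt \<noteq> cn u x"
  unfolding cn_def by auto

fun nodesU :: "node set \<Rightarrow> nat \<Rightarrow> node set" where
  "nodesU U 0 = {rt}"
| "nodesU U (Suc d) = insert rt {cn u x | u x. u \<in> U \<and> x \<in> nodesU U d}"

fun nodes :: "nat \<Rightarrow> nat \<Rightarrow> node set" where
  "nodes M 0 = {rt}"
| "nodes M (Suc j) = nodesU (nodes M j) M"

fun paths :: "node set \<Rightarrow> nat \<Rightarrow> node set set" where
  "paths U 0 = {{rt}}"
| "paths U (Suc d) = {insert rt (cn u ` p) | u p. u \<in> U \<and> p \<in> paths U d}"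

fun recs :: "node set \<Rightarrow> node set set \<Rightarrow> nat \<Rightarrow> node set set" where
  "recs U E 0 = {}"
| "recs U E (Suc d) = {(\<lambda>u. cn u rt) ` e | e. e \<in> E} \<union> {cn u ` e | u e. u \<in> U \<and> e \<in> recs U E d}"

fun edges :: "nat \<Rightarrow> nat \<Rightarrow> node set set" where
  "edges M 0 = {}"
| "edges M (Suc j) = paths (nodes M j) M \<union> recs (nodes M j) (edges M j) M"

lemma rt_in_nodesU: "rt \<in> nodesU U d" by (cases d) auto

lemma rt_in_nodes: "rt \<in> nodes M j" by (cases j) (auto simp: rt_in_nodesU)

lemma nodesU_cases: "x \<in> nodesU U (Suc d) \<Longrightarrow> x = rt \<or> (\<exists>u y. u \<in> U \<and> y \<in> nodesU U d \<and> x = cn u y)"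
  by auto

lemma cn_in_nodesU: "u \<in> U \<Longrightarrow> y \<in> nodesU U d \<Longrightarrow> cn u y \<in> nodesU U (Suc d)"
  by auto

lemma finite_nodesU: "finite U \<Longrightarrow> finite (nodesU U d)"
proof (induction d)
  case 0 then show ?case by simp
next
  case (Suc d)
  have "{cn u x | u x. u \<in> U \<and> x \<in> nodesU U d} = (\<lambda>(u,x). cn u x) ` (U \<times> nodesU U d)" by auto
  then show ?case using Suc by simp
qed

lemma finite_nodes: "finite (nodes M j)"
  by (induction j) (auto simp: finite_nodesU)

lemma paths_sub: "p \<in> paths U d \<Longrightarrow> p \<subseteq> nodesU U d"
  by (induction d arbitrary: p) auto

lemma recs_SucE: "e \<in> recs U E (Suc d) \<Longrightarrow> (\<exists>e'. e' \<in> E \<and> e = (\<lambda>u. cn u rt) ` e') \<or> (\<exists>u e'. u \<in> U \<and> e' \<in> recs U E d \<and> e = cn u ` e')"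
  by auto

lemma recs_sub: "(\<And>e. e \<in> E \<Longrightarrow> e \<subseteq> U) \<Longrightarrow> e \<in> recs U E d \<Longrightarrow> e \<subseteq> nodesU U d"
proof (induction d arbitrary: e)
  case 0 then show ?case by simp
next
  case (Suc d)
  from recs_SucE[OF Suc.prems(2)] show ?case
  proof
    assume "\<exists>e'. e' \<in> E \<and> e = (\<lambda>u. cn u rt) ` e'"
    then obtain e' where "e' \<in> E" "e = (\<lambda>u. cn u rt) ` e'" by blast
    then show ?thesis using Suc.prems(1)[of e'] rt_in_nodesU[of U d] by auto
  next
    assume "\<exists>u e'. u \<in> U \<and> e' \<in> recs U E d \<and> e = cn u ` e'"
    then obtain u e' where "u \<in> U" "e' \<in> recs U E d" "e = cn u ` e'" by blast
    then show ?thesis using Suc.IH[OF Suc.prems(1), of e'] by auto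
  qed
qed

lemma edges_sub: "e \<in> edges M j \<Longrightarrow> e \<subseteq> nodes M j"
proof (induction j arbitrary: e)
  case 0 then show ?case by simp
next
  case (Suc j)
  then have "e \<in> paths (nodes M j) M \<or> e \<in> recs (nodes M j) (edges M j) M" by simp
  then show ?case
  proof
    assume "e \<in> paths (nodes M j) M" then show ?thesis using paths_sub by simp
  next
    assume "e \<in> recs (nodes M j) (edges M j) M"
    then show ?thesis using recs_sub[of "edges M j" "nodes M j"] Suc.IH by simp
  qed
qed

lemma card_paths: "p \<in> paths U d \<Longrightarrow> card p = Suc d \<and> finite p"
proof (induction d arbitrary: p)
  case 0 then show ?case by simp
next
  case (Suc d)
  then obtain u p0 where p: "p = insert rt (cn u ` p0)" "p0 \<in> paths U d" by auto
  have i: "inj_on (cn u) p0" by (auto simp: inj_on_def)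
  have "rt \<notin> cn u ` p0" by auto
  then show ?case using p Suc.IH[OF p(2)] card_image[OF i] by simp
qed

lemma card_recs: "(\<And>e. e \<in> E \<Longrightarrow> card e = c \<and> finite e) \<Longrightarrow> e \<in> recs U E d \<Longrightarrow> card e = c \<and> finite e"
proof (induction d arbitrary: e)
  case 0 then show ?case by simp
next
  case (Suc d)
  from recs_SucE[OF Suc.prems(2)] show ?case
  proof
    assume "\<exists>e'. e' \<in> E \<and> e = (\<lambda>u. cn u rt) ` e'"
    then obtain e' where e': "e' \<in> E" "e = (\<lambda>u. cn u rt) ` e'" by blast
    have "inj_on (\<lambda>u. cn u rt) e'" by (auto simp: inj_on_def)
    then show ?thesis using e' Suc.prems(1)[of e'] by (simp add: card_image)
  next
    assume "\<exists>u e'. u \<in> U \<and> e' \<in> recs U E d \<and> e = cn u ` e'"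
    then obtain u e' where e': "u \<in> U" "e' \<in> recs U E d" "e = cn u ` e'" by blast
    have "inj_on (cn u) e'" by (auto simp: inj_on_def)
    then show ?thesis using e' Suc.IH[OF Suc.prems(1), of e'] by (simp add: card_image)
  qed
qed

lemma card_edges: "e \<in> edges M j \<Longrightarrow> card e = Suc M \<and> finite e"
proof (induction j arbitrary: e)
  case 0 then show ?case by simp
next
  case (Suc j)
  then have "e \<in> paths (nodes M j) M \<or> e \<in> recs (nodes M j) (edges M j) M" by simp
  then show ?case
  proof
    assume "e \<in> paths (nodes M j) M" then show ?thesis using card_paths by simp
  next
    assume "e \<in> recs (nodes M j) (edges M j) M"
    then show ?thesis using card_recs[of "edges M j" "Suc M"] Suc.IH by simp
  qed
qed

lemma ramsey_step:
  fixes S :: "nat set" and col :: "node \<Rightarrow> nat"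
  assumes IH: "\<And>col S'. finite S' \<Longrightarrow> card S' \<le> j \<Longrightarrow> col ` U \<subseteq> S' \<Longrightarrow> \<exists>e\<in>E. \<exists>i. \<forall>x\<in>e. col x = (i::nat)"
    and S: "finite S" "card S \<le> Suc j"
  shows "col ` nodesU U d \<subseteq> S \<Longrightarrow> (\<exists>e\<in>recs U E d. \<exists>i. \<forall>x\<in>e. col x = i) \<or> (\<exists>p\<in>paths U d. \<forall>x\<in>p. col x = col rt)"
proof (induction d arbitrary: col)
  case 0 then show ?case by simp
next
  case (Suc d)
  show ?case
  proof (cases "\<exists>u\<in>U. col (cn u rt) = col rt")
    case True
    then obtain u where u: "u \<in> U" "col (cn u rt) = col rt" by blast
    have sub: "(col \<circ> cn u) ` nodesU U d \<subseteq> S" using Suc.prems u(1) by auto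
    from Suc.IH[OF sub] show ?thesis
    proof
      assume "\<exists>e\<in>recs U E d. \<exists>i. \<forall>x\<in>e. (col \<circ> cn u) x = i"
      then obtain e i where "e \<in> recs U E d" "\<forall>x\<in>e. col (cn u x) = i" by auto
      then have "cn u ` e \<in> {cn u ` e | u e. u \<in> U \<and> e \<in> recs U E d}" using u(1) by blast
      then have "cn u ` e \<in> recs U E (Suc d)" by simp
      moreover have "\<forall>x\<in>cn u ` e. col x = i" using \<open>\<forall>x\<in>e. col (cn u x) = i\<close> by blast
      ultimately show ?thesis by blast
    next
      assume "\<exists>p\<in>paths U d. \<forall>x\<in>p. (col \<circ> cn u) x = (col \<circ> cn u) rt"
      then obtain p where p: "p \<in> paths U d" "\<forall>x\<in>p. col (cn u x) = col (cn u rt)" by auto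
      then have "insert rt (cn u ` p) \<in> {insert rt (cn u ` p) | u p. u \<in> U \<and> p \<in> paths U d}" using u(1) by blast
      then have "insert rt (cn u ` p) \<in> paths U (Suc d)" by simp
      moreover have "\<forall>x\<in>insert rt (cn u ` p). col x = col rt" using p(2) u(2) by auto
      ultimately show ?thesis by blast
    qed
  next
    case False
    let ?c = "\<lambda>u. col (cn u rt)"
    have sub: "?c ` U \<subseteq> S - {col rt}"
    proof
      fix z assume "z \<in> ?c ` U"
      then obtain u where u: "u \<in> U" "z = col (cn u rt)" by blast
      have "cn u rt \<in> nodesU U (Suc d)" using u(1) rt_in_nodesU[of U d] by auto
      then have "z \<in> S" using Suc.prems u by auto
      then show "z \<in> S - {col rt}" using False u by auto
    qed
    have "col rt \<in> S" using Suc.prems rt_in_nodesU[of U "Suc d"] by blast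
    then have cS: "card (S - {col rt}) \<le> j" using S by (simp add: card_Diff_singleton)
    have fS: "finite (S - {col rt})" using S by simp
    obtain e i where e: "e \<in> E" "\<forall>x\<in>e. ?c x = i" using IH[OF fS cS sub] by blast
    then have "(\<lambda>u. cn u rt) ` e \<in> {(\<lambda>u. cn u rt) ` e | e. e \<in> E}" by blast
    then have r: "(\<lambda>u. cn u rt) ` e \<in> recs U E (Suc d)" by simp
    have m: "\<forall>x\<in>(\<lambda>u. cn u rt) ` e. col x = i" using e(2) by simp
    show ?thesis using r m by blast
  qed
qed

lemma ramsey: "finite S \<Longrightarrow> card S \<le> j \<Longrightarrow> col ` nodes M j \<subseteq> S \<Longrightarrow> \<exists>e\<in>edges M j. \<exists>i. \<forall>x\<in>e. col x = (i::nat)"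
proof (induction j arbitrary: S col)
  case 0
  then show ?case using rt_in_nodes[of M 0] by auto
next
  case (Suc j)
  have "(\<exists>e\<in>recs (nodes M j) (edges M j) M. \<exists>i. \<forall>x\<in>e. col x = i) \<or> (\<exists>p\<in>paths (nodes M j) M. \<forall>x\<in>p. col x = col rt)"
    using ramsey_step[of j "nodes M j" "edges M j" S, OF Suc.IH Suc.prems(1,2)] Suc.prems(3) by auto
  then show ?case by auto
qed




definition qo :: "nat \<Rightarrow> real" where "qo l = (1/4)^l"

fun nn :: "nat \<Rightarrow> node \<Rightarrow> nat" where
  "nn 0 x = 0"
| "nn (Suc j) (Nd []) = 0"
| "nn (Suc j) (Nd (u # L)) = 1 + nn j u + nn (Suc j) (Nd L)"

fun om :: "real \<Rightarrow> nat \<Rightarrow> node \<Rightarrow> real" where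
  "om s 0 x = 1"
| "om s (Suc j) (Nd []) = 1"
| "om s (Suc j) (Nd (u # L)) = s * om s j u * om s (Suc j) (Nd L)"

fun ph :: "real \<Rightarrow> nat \<Rightarrow> node \<Rightarrow> real" where
  "ph s 0 x = 0"
| "ph s (Suc j) (Nd []) = 0"
| "ph s (Suc j) (Nd (u # L)) = qo (Suc j) + s * ph s j u + s * om s j u * ph s (Suc j) (Nd L)"

lemma rt_vals[simp]: "nn j rt = 0" "om s j rt = 1" "ph s j rt = 0"
  by (cases j; simp)+

lemma cn_vals:
  "nn (Suc j) (cn u x) = 1 + nn j u + nn (Suc j) x"
  "om s (Suc j) (cn u x) = s * om s j u * om s (Suc j) x"
  "ph s (Suc j) (cn u x) = qo (Suc j) + s * ph s j u + s * om s j u * ph s (Suc j) x"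
  unfolding cn_def by (simp_all add: Nd_kids)

lemma oo_pos: "0 < qo l" by (simp add: qo_def)
lemma oo_Suc: "qo (Suc l) = qo l / 4" by (simp add: qo_def)
lemma oo_anti: "l \<le> l' \<Longrightarrow> qo l' \<le> qo l"
  unfolding qo_def by (rule power_decreasing) auto
lemma oo_strict: "l < l' \<Longrightarrow> qo l' \<le> qo l / 4"
proof -
  assume "l < l'" then have "Suc l \<le> l'" by simp
  then have "qo l' \<le> qo (Suc l)" by (rule oo_anti)
  then show ?thesis by (simp add: oo_Suc)
qed
lemma oo_le_quarter: "1 \<le> l \<Longrightarrow> qo l \<le> 1/4"
  using oo_anti[of 1 l] by (simp add: qo_def)

locale cfg =
  fixes K :: nat and s :: real
  assumes s_pos: "0 < s" and s_small: "100 * s \<le> qo K"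
begin

lemma s_le_oo: "l \<le> K \<Longrightarrow> 100 * s \<le> qo l"
  using oo_anti[of l K] s_small by simp

lemma s_le: "s \<le> 1/100"
  using s_le_oo[of 0] by (simp add: qo_def)

lemma reg_step:
  assumes U: "\<forall>u\<in>U. 0 \<le> ph s j u \<and> ph s j u \<le> 1/2 \<and> 0 < om s j u \<and> om s j u \<le> 1"
  shows "x \<in> nodesU U d \<Longrightarrow> x = rt \<or> (qo (Suc j) \<le> ph s (Suc j) x \<and> ph s (Suc j) x \<le> qo (Suc j) + s \<and> 0 < om s (Suc j) x \<and> om s (Suc j) x \<le> s)"
proof (induction d arbitrary: x)
  case 0 then show ?case by simp
next
  case (Suc d)
  from nodesU_cases[OF Suc.prems] show ?case
  proof
    assume "x = rt" then show ?thesis by simp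
  next
    assume "\<exists>u y. u \<in> U \<and> y \<in> nodesU U d \<and> x = cn u y"
    then obtain u y where uy: "u \<in> U" "y \<in> nodesU U d" "x = cn u y" by blast
    have o14: "qo (Suc j) \<le> 1/4" by (rule oo_le_quarter) simp
    have yb: "0 \<le> ph s (Suc j) y \<and> ph s (Suc j) y \<le> 1/2 \<and> 0 < om s (Suc j) y \<and> om s (Suc j) y \<le> 1"
      using Suc.IH[OF uy(2)] o14 s_le oo_pos[of "Suc j"] by auto
    have ub: "0 \<le> ph s j u \<and> ph s j u \<le> 1/2 \<and> 0 < om s j u \<and> om s j u \<le> 1" using U uy(1) by blast
    have p1: "om s j u * ph s (Suc j) y \<le> 1 * (1/2)"
      using ub yb by (intro mult_mono) auto
    have p0: "0 \<le> om s j u * ph s (Suc j) y" using ub yb by simp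
    have q: "0 \<le> ph s j u + om s j u * ph s (Suc j) y \<and> ph s j u + om s j u * ph s (Suc j) y \<le> 1"
      using p1 p0 ub by simp
    have "ph s (Suc j) x = qo (Suc j) + s * (ph s j u + om s j u * ph s (Suc j) y)"
      using uy(3) by (simp add: cn_vals algebra_simps)
    moreover have "0 \<le> s * (ph s j u + om s j u * ph s (Suc j) y)" using q s_pos by simp
    moreover have "s * (ph s j u + om s j u * ph s (Suc j) y) \<le> s * 1"
      using q s_pos by (intro mult_left_mono) auto
    moreover have "0 < om s (Suc j) x" using uy(3) ub yb s_pos by (simp add: cn_vals)
    moreover have "om s j u * om s (Suc j) y \<le> 1 * 1" using ub yb by (intro mult_mono) auto
    then have "om s (Suc j) x \<le> s" using uy(3) s_pos
      by (simp add: cn_vals)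
    ultimately show ?thesis by simp
  qed
qed

lemma reg_all: "x \<in> nodes M j \<Longrightarrow> 0 \<le> ph s j x \<and> ph s j x \<le> 1/2 \<and> 0 < om s j x \<and> om s j x \<le> 1"
proof (induction j arbitrary: x)
  case 0 then show ?case by simp
next
  case (Suc j)
  have o14: "qo (Suc j) \<le> 1/4" by (rule oo_le_quarter) simp
  from reg_step[of "nodes M j" j x M] Suc show ?case using o14 s_le oo_pos[of "Suc j"] by auto
qed

lemma reg_nr: "x \<in> nodesU (nodes M j) d \<Longrightarrow> x \<noteq> rt \<Longrightarrow>
   qo (Suc j) \<le> ph s (Suc j) x \<and> ph s (Suc j) x \<le> qo (Suc j) + s \<and> 0 < om s (Suc j) x \<and> om s (Suc j) x \<le> s"
  using reg_step[of "nodes M j" j x d] reg_all[of _ M j] by blast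




end



definition Qoff :: "nat \<Rightarrow> real \<Rightarrow> nat \<Rightarrow> real \<Rightarrow> bool" where
  "Qoff K s j v \<longleftrightarrow> v = 0 \<or> (\<exists>l. j < l \<and> l \<le> K \<and> qo l \<le> v \<and> v \<le> qo l + 2* s)"
definition notZ :: "real \<Rightarrow> nat \<Rightarrow> real \<Rightarrow> bool" where
  "notZ s l a \<longleftrightarrow> a < qo l - s \<or> qo l + 2* s < a"
definition sepc :: "nat \<Rightarrow> real \<Rightarrow> nat \<Rightarrow> nat \<Rightarrow> nat \<Rightarrow> real \<Rightarrow> bool" where
  "sepc K s j n n' a \<longleftrightarrow> (\<forall>l. j < l \<longrightarrow> l \<le> K \<longrightarrow> notZ s l a) \<and> 2 * qo (Suc j) < \<bar>a\<bar> \<and> (n' < n \<or> 1 < \<bar>a\<bar>)"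
definition SEP :: "nat \<Rightarrow> real \<Rightarrow> nat \<Rightarrow> node set \<Rightarrow> bool" where
  "SEP K s j N \<longleftrightarrow> (\<forall>w\<in>N. \<forall>w'\<in>N. w \<noteq> w' \<longrightarrow> (\<forall>v. Qoff K s j v \<longrightarrow>
      sepc K s j (nn j w) (nn j w') ((ph s j w + om s j w * v - ph s j w') / om s j w')))"

lemma nn_pos_nr: assumes "x \<in> nodesU U d" "x \<noteq> rt" shows "0 < nn (Suc j) x"
proof (cases d)
  case 0 then show ?thesis using assms by simp
next
  case (Suc d')
  then obtain u y where "x = cn u y" using nodesU_cases assms by blast
  then show ?thesis by (simp add: cn_vals)
qed

context cfg
begin

lemma far: "1 < \<bar>a\<bar> \<Longrightarrow> sepc K s j n n' a"
proof -
  assume a: "1 < \<bar>a\<bar>"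
  have "notZ s l a" if "j < l" for l
  proof -
    have "qo l \<le> 1/4" using that by (intro oo_le_quarter) simp
    then show ?thesis using a s_le oo_pos[of l] unfolding notZ_def by auto
  qed
  moreover have "qo (Suc j) \<le> 1/4" by (intro oo_le_quarter) simp
  ultimately show ?thesis using a unfolding sepc_def by auto
qed

lemma Qoff_bnd: "Qoff K s j v \<Longrightarrow> 0 \<le> v \<and> v \<le> 1/2"
proof -
  assume "Qoff K s j v"
  then consider "v = 0" | l where "j < l" "qo l \<le> v" "v \<le> qo l + 2* s" unfolding Qoff_def by auto
  then show ?thesis
  proof cases
    case 1 then show ?thesis by simp
  next
    case 2
    have "qo l \<le> 1/4" using 2 by (intro oo_le_quarter) simp
    then show ?thesis using 2 oo_pos[of l] s_le by auto
  qed
qed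

lemma Qoff_Suc: "Qoff K s (Suc j) v \<Longrightarrow> Qoff K s j v"
  unfolding Qoff_def using Suc_lessD by blast

lemma Qoff_here: "Suc j \<le> K \<Longrightarrow> qo (Suc j) \<le> v \<Longrightarrow> v \<le> qo (Suc j) + 2* s \<Longrightarrow> Qoff K s j v"
  unfolding Qoff_def by auto

lemma Qoff_small: "Qoff K s (Suc j) v \<Longrightarrow> v \<le> qo (Suc j) / 4 + 2 * s"
proof -
  assume "Qoff K s (Suc j) v"
  then consider "v = 0" | l where "Suc j < l" "qo l \<le> v" "v \<le> qo l + 2* s" unfolding Qoff_def by auto
  then show ?thesis
  proof cases
    case 1 then show ?thesis using oo_pos[of "Suc j"] s_pos by simp
  next
    case 2
    have "qo l \<le> qo (Suc j) / 4" using 2 by (intro oo_strict) simp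
    then show ?thesis using 2 by simp
  qed
qed

lemma sep_c1:
  assumes w': "w' \<in> nodesU (nodes M j) d" "w' \<noteq> rt" and jK: "Suc j \<le> K" and v: "Qoff K s (Suc j) v"
  shows "1 < \<bar>(ph s (Suc j) rt + om s (Suc j) rt * v - ph s (Suc j) w') / om s (Suc j) w'\<bar>"
proof -
  let ?o = "qo (Suc j)" let ?P = "ph s (Suc j) w'" let ?W = "om s (Suc j) w'"
  have r: "?o \<le> ?P" "?P \<le> ?o + s" "0 < ?W" "?W \<le> s" using reg_nr[OF w'] by auto
  have vs: "v \<le> ?o / 4 + 2 * s" by (rule Qoff_small[OF v])
  have os: "100 * s \<le> ?o" by (rule s_le_oo[OF jK])
  have "v - ?P < - ?W" using r vs os s_pos by linarith
  then have "(v - ?P) / ?W < -1" using r(3) by (simp add: divide_less_eq)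
  then have "1 < \<bar>(v - ?P) / ?W\<bar>" by arith
  then show ?thesis by simp
qed

lemma sep_c2:
  assumes w: "w \<in> nodesU (nodes M j) d" "w \<noteq> rt" and jK: "Suc j \<le> K" and v: "Qoff K s (Suc j) v"
  shows "sepc K s (Suc j) (nn (Suc j) w) (nn (Suc j) rt) ((ph s (Suc j) w + om s (Suc j) w * v - ph s (Suc j) rt) / om s (Suc j) rt)"
proof -
  let ?o = "qo (Suc j)" let ?P = "ph s (Suc j) w" let ?W = "om s (Suc j) w"
  have r: "?o \<le> ?P" "?P \<le> ?o + s" "0 < ?W" "?W \<le> s" using reg_nr[OF w] by auto
  have vb: "0 \<le> v" "v \<le> 1/2" using Qoff_bnd[OF Qoff_Suc[OF v]] by auto
  have os: "100 * s \<le> ?o" by (rule s_le_oo[OF jK])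
  have "0 \<le> ?W * v" using r vb by simp
  then have a0: "?o \<le> ?P + ?W * v" using r by linarith
  have "notZ s l (?P + ?W * v)" if "Suc j < l" "l \<le> K" for l
  proof -
    have "qo l \<le> ?o / 4" using that by (intro oo_strict) simp
    then show ?thesis using a0 os s_pos unfolding notZ_def by linarith
  qed
  moreover have "2 * qo (Suc (Suc j)) < \<bar>?P + ?W * v\<bar>" using a0 oo_pos[of "Suc j"] by (simp add: oo_Suc)
  moreover have "0 < nn (Suc j) w" by (rule nn_pos_nr[OF w])
  ultimately show ?thesis unfolding sepc_def by simp
qed

lemma alg_same:
  assumes "0 < om s j u" "om s (Suc j) x' \<noteq> 0"
  shows "(ph s (Suc j) (cn u x) + om s (Suc j) (cn u x) * v - ph s (Suc j) (cn u x')) / om s (Suc j) (cn u x')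
       = (ph s (Suc j) x + om s (Suc j) x * v - ph s (Suc j) x') / om s (Suc j) x'"
  using assms s_pos by (simp add: cn_vals field_simps)

lemma alg_diff:
  assumes "0 < om s j u'" "om s (Suc j) x' \<noteq> 0"
  shows "(ph s (Suc j) (cn u x) + om s (Suc j) (cn u x) * v - ph s (Suc j) (cn u' x')) / om s (Suc j) (cn u' x')
       = ((ph s j u + om s j u * (ph s (Suc j) x + om s (Suc j) x * v) - ph s j u') / om s j u' - ph s (Suc j) x') / om s (Suc j) x'"
  using assms s_pos by (simp add: cn_vals field_simps)

lemma nz_far:
  assumes "notZ s (Suc j) b" "qo (Suc j) \<le> p" "p \<le> qo (Suc j) + s" "0 < w" "w \<le> s"
  shows "1 < \<bar>(b - p) / w\<bar>"
proof -
  have "b < qo (Suc j) - s \<or> qo (Suc j) + 2* s < b" using assms(1) unfolding notZ_def .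
  then have "s < \<bar>b - p\<bar>" using assms(2,3) by linarith
  then have "w < \<bar>b - p\<bar>" using assms(5) by linarith
  then have "1 < \<bar>b - p\<bar> / w" using assms(4) by (simp add: less_divide_eq)
  then show ?thesis using assms(4) by simp
qed

end



lemma sepc_shift: "sepc K s j (c + n) (c + n') a \<longleftrightarrow> sepc K s j n n' a"
  unfolding sepc_def by simp

context cfg
begin

lemma reg_U: "x \<in> nodesU (nodes M j) d \<Longrightarrow> 0 \<le> ph s (Suc j) x \<and> ph s (Suc j) x \<le> 1/2 \<and> 0 < om s (Suc j) x \<and> om s (Suc j) x \<le> 1"
proof -
  assume x: "x \<in> nodesU (nodes M j) d"
  have "nodesU (nodes M j) d \<subseteq> nodes M (Suc j) \<or> True" by simp
  show ?thesis
  proof (cases "x = rt")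
    case True then show ?thesis by simp
  next
    case False
    have o14: "qo (Suc j) \<le> 1/4" by (rule oo_le_quarter) simp
    show ?thesis using reg_nr[OF x False] o14 s_le oo_pos[of "Suc j"] by auto
  qed
qed

lemma Qoff_node: assumes "Suc j \<le> K" "y \<in> nodesU (nodes M j) d" shows "Qoff K s j (ph s (Suc j) y)"
proof (cases "y = rt")
  case True then show ?thesis unfolding Qoff_def by simp
next
  case False
  from reg_nr[OF assms(2) False] have "qo (Suc j) \<le> ph s (Suc j) y" "ph s (Suc j) y \<le> qo (Suc j) + 2* s"
    using s_pos by auto
  then show ?thesis using Qoff_here[OF assms(1)] by blast
qed

lemma sep_step:
  assumes jK: "Suc j \<le> K" and SU: "SEP K s j (nodes M j)"
  shows "SEP K s (Suc j) (nodesU (nodes M j) d)"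
proof (induction d)
  case 0 show ?case unfolding SEP_def by simp
next
  case (Suc d)
  show ?case unfolding SEP_def
  proof (intro ballI impI allI)
    fix w w' v
    assume w: "w \<in> nodesU (nodes M j) (Suc d)" and w': "w' \<in> nodesU (nodes M j) (Suc d)"
      and ne: "w \<noteq> w'" and v: "Qoff K s (Suc j) v"
    let ?a = "(ph s (Suc j) w + om s (Suc j) w * v - ph s (Suc j) w') / om s (Suc j) w'"
    show "sepc K s (Suc j) (nn (Suc j) w) (nn (Suc j) w') ?a"
    proof (cases "w = rt")
      case True
      then have w'r: "w' \<noteq> rt" using ne by simp
      have "1 < \<bar>?a\<bar>" using sep_c1[OF w' w'r jK v] True by simp
      then show ?thesis by (rule far)
    next
      case wnr: False
      show ?thesis
      proof (cases "w' = rt")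
        case True then show ?thesis using sep_c2[OF w wnr jK v] by simp
      next
        case w'nr: False
        obtain u x where ux: "u \<in> nodes M j" "x \<in> nodesU (nodes M j) d" "w = cn u x"
          using nodesU_cases[OF w] wnr by blast
        obtain u' x' where ux': "u' \<in> nodes M j" "x' \<in> nodesU (nodes M j) d" "w' = cn u' x'"
          using nodesU_cases[OF w'] w'nr by blast
        have Wx': "0 < om s (Suc j) x'" using reg_U[OF ux'(2)] by simp
        have Wu': "0 < om s j u'" using reg_all[OF ux'(1)] by simp
        have Wu: "0 < om s j u" using reg_all[OF ux(1)] by simp
        show ?thesis
        proof (cases "u = u'")
          case True
          then have xx: "x \<noteq> x'" using ne ux ux' by auto
          have eq: "?a = (ph s (Suc j) x + om s (Suc j) x * v - ph s (Suc j) x') / om s (Suc j) x'"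
            using alg_same[OF Wu, of x' x v] Wx' ux(3) ux'(3) True by simp
          have "sepc K s (Suc j) (nn (Suc j) x) (nn (Suc j) x') ((ph s (Suc j) x + om s (Suc j) x * v - ph s (Suc j) x') / om s (Suc j) x')"
            using Suc.IH[unfolded SEP_def, rule_format, OF ux(2) ux'(2) xx v] .
          then show ?thesis using eq ux(3) ux'(3) True sepc_shift[of K s "Suc j" "1 + nn j u'"]
            by (simp add: cn_vals)
        next
          case False
          let ?vu = "ph s (Suc j) x + om s (Suc j) x * v"
          have vb: "0 \<le> v" "v \<le> 1/2" using Qoff_bnd[OF Qoff_Suc[OF v]] by auto
          have qv: "Qoff K s j ?vu"
          proof (cases "x = rt")
            case True then show ?thesis using Qoff_Suc[OF v] by simp
          next
            case False
            have r: "qo (Suc j) \<le> ph s (Suc j) x" "ph s (Suc j) x \<le> qo (Suc j) + s" "0 < om s (Suc j) x" "om s (Suc j) x \<le> s"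
              using reg_nr[OF ux(2) False] by auto
            have "0 \<le> om s (Suc j) x * v" using r vb by simp
            moreover have "om s (Suc j) x * v \<le> s * 1" using r vb by (intro mult_mono) auto
            ultimately show ?thesis using r by (intro Qoff_here[OF jK]) auto
          qed
          let ?b = "(ph s j u + om s j u * ?vu - ph s j u') / om s j u'"
          have sb: "sepc K s j (nn j u) (nn j u') ?b"
            using SU[unfolded SEP_def, rule_format, OF ux(1) ux'(1) False qv] .
          have eq: "?a = (?b - ph s (Suc j) x') / om s (Suc j) x'"
            using alg_diff[OF Wu', of x' u x v] Wx' ux(3) ux'(3) by simp
          have nz: "notZ s (Suc j) ?b" using sb jK unfolding sepc_def by simp
          show ?thesis
          proof (cases "x' = rt")
            case True
            have ab: "?a = ?b" using eq True by simp
            have p1: "\<forall>l. Suc j < l \<longrightarrow> l \<le> K \<longrightarrow> notZ s l ?b" using sb unfolding sepc_def by auto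
            have "qo (Suc (Suc j)) \<le> qo (Suc j)" by (rule oo_anti) simp
            then have p2: "2 * qo (Suc (Suc j)) < \<bar>?b\<bar>" using sb unfolding sepc_def by linarith
            have p3: "nn j u' < nn j u \<or> 1 < \<bar>?b\<bar>" using sb unfolding sepc_def by blast
            have n3: "nn (Suc j) w' < nn (Suc j) w \<or> 1 < \<bar>?b\<bar>"
              using p3 ux(3) ux'(3) True by (auto simp: cn_vals)
            show ?thesis unfolding sepc_def ab using p1 p2 n3 by blast
          next
            case False
            have r: "qo (Suc j) \<le> ph s (Suc j) x'" "ph s (Suc j) x' \<le> qo (Suc j) + s" "0 < om s (Suc j) x'" "om s (Suc j) x' \<le> s"
              using reg_nr[OF ux'(2) False] by auto
            have "1 < \<bar>?a\<bar>" using nz_far[OF nz r] eq by simp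
            then show ?thesis by (rule far)
          qed
        qed
      qed
    qed
  qed
qed

lemma sep_all: "j \<le> K \<Longrightarrow> SEP K s j (nodes M j)"
proof (induction j)
  case 0 show ?case unfolding SEP_def by simp
next
  case (Suc j)
  then show ?case using sep_step[of j M M] by simp
qed

end



definition AA :: "nat \<Rightarrow> real" where "AA l = 4 * (qo l)^2"

definition SEL :: "real \<Rightarrow> nat \<Rightarrow> node set \<Rightarrow> node set \<Rightarrow> real \<Rightarrow> nat \<Rightarrow> nat \<Rightarrow> bool" where
  "SEL s j N e th t l \<longleftrightarrow> (\<forall>\<rho>. (\<forall>n. t \<le> n \<longrightarrow> AA l / 2 \<le> \<rho> n \<and> \<rho> n \<le> AA l) \<longrightarrow>
     (\<forall>x\<in>N. (t \<le> nn j x \<and> (ph s j x - th)^2 \<le> (om s j x)^2 * \<rho> (nn j x)) \<longleftrightarrow> x \<in> e))"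

lemma AA_pos: "0 < AA l" unfolding AA_def using oo_pos[of l] by simp

lemma AA_le: "1 \<le> l \<Longrightarrow> AA l \<le> 1/4"
proof -
  assume "1 \<le> l"
  then have o: "qo l \<le> 1/4" by (rule oo_le_quarter)
  have "(qo l)^2 \<le> (1/4)^2" using o oo_pos[of l] by (intro power_mono) auto
  also have "(1/4::real)^2 = 1/16" by (simp add: power2_eq_square)
  finally show ?thesis unfolding AA_def by simp
qed

context cfg
begin

lemma shift_eq:
  assumes "0 < om s j u'"
  shows "(ph s (Suc j) (cn u' x0) - ph s (Suc j) (cn u y0))^2 \<le> (om s (Suc j) (cn u' x0))^2 * r
     \<longleftrightarrow> (ph s (Suc j) x0 - (ph s j u + om s j u * ph s (Suc j) y0 - ph s j u') / om s j u')^2 \<le> (om s (Suc j) x0)^2 * r"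
proof -
  let ?c = "s * om s j u'"
  let ?B = "(ph s j u + om s j u * ph s (Suc j) y0 - ph s j u') / om s j u'"
  have c: "0 < ?c" using assms s_pos by simp
  have e1: "ph s (Suc j) (cn u' x0) - ph s (Suc j) (cn u y0) = ?c * (ph s (Suc j) x0 - ?B)"
    using assms s_pos by (simp add: cn_vals field_simps)
  have e2: "om s (Suc j) (cn u' x0) = ?c * om s (Suc j) x0" by (simp add: cn_vals)
  have "(?c * (ph s (Suc j) x0 - ?B))^2 \<le> (?c * om s (Suc j) x0)^2 * r
       \<longleftrightarrow> ?c^2 * (ph s (Suc j) x0 - ?B)^2 \<le> ?c^2 * ((om s (Suc j) x0)^2 * r)"
    by (simp add: power_mult_distrib mult.assoc)
  also have "\<dots> \<longleftrightarrow> (ph s (Suc j) x0 - ?B)^2 \<le> (om s (Suc j) x0)^2 * r"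
  proof -
    have c2: "0 < ?c^2" using zero_less_power[OF c, of 2] .
    show ?thesis by (rule mult_le_cancel_left_pos[OF c2])
  qed
  finally show ?thesis unfolding e1 e2 .
qed

lemma shift_same:
  assumes "0 < om s j u"
  shows "(ph s (Suc j) (cn u x0) - ph s (Suc j) (cn u y0))^2 \<le> (om s (Suc j) (cn u x0))^2 * r
     \<longleftrightarrow> (ph s (Suc j) x0 - ph s (Suc j) y0)^2 \<le> (om s (Suc j) x0)^2 * r"
proof -
  have "(ph s j u + om s j u * ph s (Suc j) y0 - ph s j u) / om s j u = ph s (Suc j) y0"
    using assms by simp
  then show ?thesis using shift_eq[OF assms, of x0 u y0 r] by simp
qed

lemma shift_rt:
  assumes "0 < om s j u"
  shows "(ph s (Suc j) (cn u rt) - ph s (Suc j) (cn y rt))^2 \<le> (om s (Suc j) (cn u rt))^2 * r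
     \<longleftrightarrow> (ph s j u - ph s j y)^2 \<le> (om s j u)^2 * r"
proof -
  have c: "0 < s^2" using s_pos by simp
  have e1: "ph s (Suc j) (cn u rt) - ph s (Suc j) (cn y rt) = s * (ph s j u - ph s j y)"
    by (simp add: cn_vals algebra_simps)
  have e2: "om s (Suc j) (cn u rt) = s * om s j u" by (simp add: cn_vals)
  have "(s * (ph s j u - ph s j y))^2 \<le> (s * om s j u)^2 * r
       \<longleftrightarrow> s^2 * (ph s j u - ph s j y)^2 \<le> s^2 * ((om s j u)^2 * r)"
    by (simp add: power_mult_distrib mult.assoc)
  also have "\<dots> \<longleftrightarrow> (ph s j u - ph s j y)^2 \<le> (om s j u)^2 * r"
    using c by (intro mult_le_cancel_left_pos)
  finally show ?thesis using e1 e2 by simp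
qed

lemma excl_nr:
  assumes "notZ s (Suc j) b" "qo (Suc j) \<le> p" "p \<le> qo (Suc j) + s" "0 < w" "w \<le> s" "0 \<le> r" "r \<le> 1"
  shows "\<not> (p - b)^2 \<le> w^2 * r"
proof -
  have "1 < \<bar>(b - p) / w\<bar>" by (rule nz_far[OF assms(1-5)])
  then have "w < \<bar>b - p\<bar>" using assms(4) by (simp add: less_divide_eq)
  then have "w^2 < \<bar>b - p\<bar>^2" using assms(4) by (intro power_strict_mono) auto
  then have "w^2 < (p - b)^2" by (simp add: power2_abs power2_commute)
  moreover have "w^2 * r \<le> w^2 * 1" using assms(6,7) by (intro mult_left_mono) auto
  ultimately show ?thesis by simp
qed

lemma excl_big:
  fixes b c r :: real
  assumes "c < \<bar>b\<bar>" "0 \<le> c" "r \<le> c^2"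
  shows "\<not> (0 - b)^2 \<le> 1 * r"
proof -
  have "c^2 < \<bar>b\<bar>^2" using power_strict_mono[of c "\<bar>b\<bar>" 2] assms by simp
  then show ?thesis using assms(3) by (simp add: power2_abs)
qed

lemma root_in:
  assumes jK: "Suc j \<le> K" and th: "qo (Suc j) \<le> th" "th \<le> qo (Suc j) + s" and r: "AA (Suc j) / 2 \<le> r"
  shows "(0 - th)^2 \<le> 1 * r"
proof -
  let ?o = "qo (Suc j)"
  have os: "100 * s \<le> ?o" by (rule s_le_oo[OF jK])
  have "th \<le> 2 * ?o" using th os s_pos by linarith
  have "th^2 \<le> (?o + s)^2" using th oo_pos[of "Suc j"] by (intro power_mono) auto
  also have "\<dots> \<le> 2 * ?o^2"
  proof -
    have "?o + s \<le> (101/100) * ?o" using os by simp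
    then have "(?o + s)^2 \<le> ((101/100) * ?o)^2" using s_pos oo_pos[of "Suc j"] by (intro power_mono) auto
    also have "\<dots> = (10201/10000) * ?o^2" by (simp add: power_mult_distrib power2_eq_square)
    also have "\<dots> \<le> 2 * ?o^2" using zero_le_power2[of ?o] by linarith
    finally show ?thesis .
  qed
  finally show ?thesis using r unfolding AA_def by simp
qed

end



context cfg
begin

lemma MP:
  assumes jK: "Suc j \<le> K" and SU: "SEP K s j (nodes M j)"
  shows "p \<in> paths (nodes M j) d \<Longrightarrow> \<exists>y\<in>nodesU (nodes M j) d. SEL s (Suc j) (nodesU (nodes M j) d) p (ph s (Suc j) y) 0 (Suc j)"
proof (induction d arbitrary: p)
  case 0
  then have p: "p = {rt}" by simp
  have "SEL s (Suc j) (nodesU (nodes M j) 0) p (ph s (Suc j) rt) 0 (Suc j)"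
    unfolding SEL_def
  proof (intro allI impI ballI)
    fix \<rho> :: "nat \<Rightarrow> real" and x
    assume r: "\<forall>n. 0 \<le> n \<longrightarrow> AA (Suc j) / 2 \<le> \<rho> n \<and> \<rho> n \<le> AA (Suc j)" and x: "x \<in> nodesU (nodes M j) 0"
    have "0 \<le> \<rho> 0" using r AA_pos[of "Suc j"] by (metis le0 half_gt_zero less_le_trans less_imp_le)
    then show "(0 \<le> nn (Suc j) x \<and> (ph s (Suc j) x - ph s (Suc j) rt)^2 \<le> (om s (Suc j) x)^2 * \<rho> (nn (Suc j) x)) \<longleftrightarrow> x \<in> p"
      using x p by simp
  qed
  then show ?case by (intro bexI[of _ rt]) (auto simp: rt_in_nodesU)
next
  case (Suc d)
  from Suc.prems obtain u p0 where up: "u \<in> nodes M j" "p0 \<in> paths (nodes M j) d" "p = insert rt (cn u ` p0)"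
    by auto
  obtain y0 where y0: "y0 \<in> nodesU (nodes M j) d" and sel0: "SEL s (Suc j) (nodesU (nodes M j) d) p0 (ph s (Suc j) y0) 0 (Suc j)"
    using Suc.IH[OF up(2)] by blast
  let ?y = "cn u y0"
  have yin: "?y \<in> nodesU (nodes M j) (Suc d)" using up(1) y0 by auto
  have Wu: "0 < om s j u" using reg_all[OF up(1)] by simp
  have "SEL s (Suc j) (nodesU (nodes M j) (Suc d)) p (ph s (Suc j) ?y) 0 (Suc j)"
    unfolding SEL_def
  proof (intro allI impI ballI)
    fix \<rho> :: "nat \<Rightarrow> real" and x
    assume r: "\<forall>n. 0 \<le> n \<longrightarrow> AA (Suc j) / 2 \<le> \<rho> n \<and> \<rho> n \<le> AA (Suc j)" and x: "x \<in> nodesU (nodes M j) (Suc d)"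
    show "(0 \<le> nn (Suc j) x \<and> (ph s (Suc j) x - ph s (Suc j) ?y)^2 \<le> (om s (Suc j) x)^2 * \<rho> (nn (Suc j) x)) \<longleftrightarrow> x \<in> p"
    proof (cases "x = rt")
      case True
      have th: "qo (Suc j) \<le> ph s (Suc j) ?y" "ph s (Suc j) ?y \<le> qo (Suc j) + s"
        using reg_nr[OF yin] by auto
      have "(0 - ph s (Suc j) ?y)^2 \<le> 1 * \<rho> 0" using root_in[OF jK th] r by simp
      then show ?thesis using True up(3) by simp
    next
      case False
      then obtain u' x0 where ux: "u' \<in> nodes M j" "x0 \<in> nodesU (nodes M j) d" "x = cn u' x0"
        using nodesU_cases[OF x] by blast
      show ?thesis
      proof (cases "u' = u")
        case True
        have mem: "x \<in> p \<longleftrightarrow> x0 \<in> p0" using up(3) ux(3) True by auto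
        let ?r = "\<lambda>n. \<rho> (1 + nn j u + n)"
        have r': "\<forall>n. 0 \<le> n \<longrightarrow> AA (Suc j) / 2 \<le> ?r n \<and> ?r n \<le> AA (Suc j)" using r by simp
        have i: "(0 \<le> nn (Suc j) x0 \<and> (ph s (Suc j) x0 - ph s (Suc j) y0)^2 \<le> (om s (Suc j) x0)^2 * ?r (nn (Suc j) x0)) \<longleftrightarrow> x0 \<in> p0"
          using mp[OF sel0[unfolded SEL_def, THEN spec[where x="?r"]] r'] ux(2) by (rule bspec)
        have "(ph s (Suc j) x - ph s (Suc j) ?y)^2 \<le> (om s (Suc j) x)^2 * \<rho> (nn (Suc j) x)
              \<longleftrightarrow> (ph s (Suc j) x0 - ph s (Suc j) y0)^2 \<le> (om s (Suc j) x0)^2 * ?r (nn (Suc j) x0)"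
          using shift_same[OF Wu, of x0 y0] ux(3) True by (simp add: cn_vals)
        then show ?thesis using i mem by simp
      next
        case False
        have nm: "x \<notin> p" using up(3) ux(3) False by auto
        have Wu': "0 < om s j u'" using reg_all[OF ux(1)] by simp
        let ?B = "(ph s j u + om s j u * ph s (Suc j) y0 - ph s j u') / om s j u'"
        have sb: "sepc K s j (nn j u) (nn j u') ?B"
          using SU[unfolded SEP_def, rule_format, OF up(1) ux(1) _ Qoff_node[OF jK y0]] False by blast
        have rb: "AA (Suc j) / 2 \<le> \<rho> (nn (Suc j) x)" "\<rho> (nn (Suc j) x) \<le> AA (Suc j)" using r by auto
        have "\<not> (ph s (Suc j) x0 - ?B)^2 \<le> (om s (Suc j) x0)^2 * \<rho> (nn (Suc j) x)"
        proof (cases "x0 = rt")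
          case True
          have "2 * qo (Suc j) < \<bar>?B\<bar>" using sb unfolding sepc_def by blast
          moreover have "\<rho> (nn (Suc j) x) \<le> (2 * qo (Suc j))^2" using rb unfolding AA_def by (simp add: power_mult_distrib)
          ultimately show ?thesis using excl_big[of "2 * qo (Suc j)" ?B] oo_pos[of "Suc j"] True by simp
        next
          case False
          have nz: "notZ s (Suc j) ?B" using sb jK unfolding sepc_def by simp
          have rg: "qo (Suc j) \<le> ph s (Suc j) x0" "ph s (Suc j) x0 \<le> qo (Suc j) + s" "0 < om s (Suc j) x0" "om s (Suc j) x0 \<le> s"
            using reg_nr[OF ux(2) False] by auto
          have "0 \<le> \<rho> (nn (Suc j) x)" using rb AA_pos[of "Suc j"] by linarith
          moreover have "\<rho> (nn (Suc j) x) \<le> 1" using rb AA_le[of "Suc j"] by simp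
          ultimately show ?thesis using excl_nr[OF nz rg] by simp
        qed
        then have "\<not> (ph s (Suc j) x - ph s (Suc j) ?y)^2 \<le> (om s (Suc j) x)^2 * \<rho> (nn (Suc j) x)"
          using shift_eq[OF Wu', of x0 u y0] ux(3) by simp
        then show ?thesis using nm by simp
      qed
    qed
  qed
  then show ?case using yin by blast
qed

end



context cfg
begin

lemma MR:
  assumes jK: "Suc j \<le> K" and SU: "SEP K s j (nodes M j)"
    and EU: "\<forall>e\<in>E. \<exists>y\<in>nodes M j. \<exists>t l. 1 \<le> l \<and> l \<le> j \<and> SEL s j (nodes M j) e (ph s j y) t l"
  shows "e \<in> recs (nodes M j) E d \<Longrightarrow> \<exists>y\<in>nodesU (nodes M j) d. \<exists>t l. 1 \<le> l \<and> l \<le> Suc j \<and> SEL s (Suc j) (nodesU (nodes M j) d) e (ph s (Suc j) y) t l"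
proof (induction d arbitrary: e)
  case 0 then show ?case by simp
next
  case (Suc d)
  let ?N = "nodesU (nodes M j) (Suc d)"
  from recs_SucE[OF Suc.prems] show ?case
  proof
    assume "\<exists>e'. e' \<in> E \<and> e = (\<lambda>u. cn u rt) ` e'"
    then obtain e' where e': "e' \<in> E" "e = (\<lambda>u. cn u rt) ` e'" by blast
    obtain y' t' l' where yl: "y' \<in> nodes M j" "1 \<le> l'" "l' \<le> j" and sel': "SEL s j (nodes M j) e' (ph s j y') t' l'"
      using EU e'(1) by blast
    let ?y = "cn y' rt"
    have yin: "?y \<in> ?N" using yl(1) rt_in_nodesU[of "nodes M j" d] by auto
    have Wy': "0 < om s j y'" using reg_all[OF yl(1)] by simp
    have selN: "SEL s (Suc j) ?N e (ph s (Suc j) ?y) (Suc t') l'"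
      unfolding SEL_def
    proof (intro allI impI ballI)
      fix \<rho> :: "nat \<Rightarrow> real" and x
      assume r: "\<forall>n. Suc t' \<le> n \<longrightarrow> AA l' / 2 \<le> \<rho> n \<and> \<rho> n \<le> AA l'" and x: "x \<in> ?N"
      show "(Suc t' \<le> nn (Suc j) x \<and> (ph s (Suc j) x - ph s (Suc j) ?y)^2 \<le> (om s (Suc j) x)^2 * \<rho> (nn (Suc j) x)) \<longleftrightarrow> x \<in> e"
      proof (cases "x = rt")
        case True
        have "x \<notin> e" using True e'(2) by auto
        then show ?thesis using True by simp
      next
        case False
        then obtain u x0 where ux: "u \<in> nodes M j" "x0 \<in> nodesU (nodes M j) d" "x = cn u x0"
          using nodesU_cases[OF x] by blast
        have Wu: "0 < om s j u" using reg_all[OF ux(1)] by simp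
        show ?thesis
        proof (cases "x0 = rt")
          case True
          have mem: "x \<in> e \<longleftrightarrow> u \<in> e'" using e'(2) ux(3) True by auto
          let ?r = "\<lambda>n. \<rho> (Suc n)"
          have r': "\<forall>n. t' \<le> n \<longrightarrow> AA l' / 2 \<le> ?r n \<and> ?r n \<le> AA l'" using r by simp
          have i: "(t' \<le> nn j u \<and> (ph s j u - ph s j y')^2 \<le> (om s j u)^2 * ?r (nn j u)) \<longleftrightarrow> u \<in> e'"
            using mp[OF sel'[unfolded SEL_def, THEN spec[where x="?r"]] r'] ux(1) by (rule bspec)
          have "(ph s (Suc j) x - ph s (Suc j) ?y)^2 \<le> (om s (Suc j) x)^2 * \<rho> (nn (Suc j) x)
              \<longleftrightarrow> (ph s j u - ph s j y')^2 \<le> (om s j u)^2 * ?r (nn j u)"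
            using shift_rt[OF Wu, of y'] ux(3) True by (simp add: cn_vals)
          moreover have "Suc t' \<le> nn (Suc j) x \<longleftrightarrow> t' \<le> nn j u" using ux(3) True by (simp add: cn_vals)
          ultimately show ?thesis using i mem by simp
        next
          case x0nr: False
          have nm: "x \<notin> e" using e'(2) ux(3) x0nr by auto
          have "\<not> (Suc t' \<le> nn (Suc j) x \<and> (ph s (Suc j) x - ph s (Suc j) ?y)^2 \<le> (om s (Suc j) x)^2 * \<rho> (nn (Suc j) x))"
          proof
            assume a: "Suc t' \<le> nn (Suc j) x \<and> (ph s (Suc j) x - ph s (Suc j) ?y)^2 \<le> (om s (Suc j) x)^2 * \<rho> (nn (Suc j) x)"
            let ?B = "(ph s j y' + om s j y' * ph s (Suc j) rt - ph s j u) / om s j u"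
            have rb: "AA l' / 2 \<le> \<rho> (nn (Suc j) x)" "\<rho> (nn (Suc j) x) \<le> AA l'" using r a by auto
            have g: "(ph s (Suc j) x0 - ?B)^2 \<le> (om s (Suc j) x0)^2 * \<rho> (nn (Suc j) x)"
              using a shift_eq[OF Wu, of x0 y' rt] ux(3) by simp
            have nz: "notZ s (Suc j) ?B"
            proof (cases "u = y'")
              case True
              have "100 * s \<le> qo (Suc j)" by (rule s_le_oo[OF jK])
              then show ?thesis using True s_pos unfolding notZ_def by simp
            next
              case False
              have q0: "Qoff K s j 0" unfolding Qoff_def by simp
              have "sepc K s j (nn j y') (nn j u) ((ph s j y' + om s j y' * 0 - ph s j u) / om s j u)"
                using SU[unfolded SEP_def, rule_format, OF yl(1) ux(1) _ q0] False by auto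
              then show ?thesis using jK unfolding sepc_def by simp
            qed
            have rg: "qo (Suc j) \<le> ph s (Suc j) x0" "ph s (Suc j) x0 \<le> qo (Suc j) + s" "0 < om s (Suc j) x0" "om s (Suc j) x0 \<le> s"
              using reg_nr[OF ux(2) x0nr] by auto
            have "0 \<le> \<rho> (nn (Suc j) x)" using rb AA_pos[of l'] by linarith
            moreover have "\<rho> (nn (Suc j) x) \<le> 1" using rb AA_le[OF yl(2)] by simp
            ultimately show False using excl_nr[OF nz rg] g by simp
          qed
          then show ?thesis using nm by simp
        qed
      qed
    qed
    have "\<exists>t l. 1 \<le> l \<and> l \<le> Suc j \<and> SEL s (Suc j) ?N e (ph s (Suc j) ?y) t l"
      using selN yl(2,3) by (intro exI[of _ "Suc t'"] exI[of _ l']) simp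
    then show ?thesis using yin by blast
  next
    assume "\<exists>w e0. w \<in> nodes M j \<and> e0 \<in> recs (nodes M j) E d \<and> e = cn w ` e0"
    then obtain w e0 where we: "w \<in> nodes M j" "e0 \<in> recs (nodes M j) E d" "e = cn w ` e0" by blast
    obtain y0 t0 l0 where yl: "y0 \<in> nodesU (nodes M j) d" "1 \<le> l0" "l0 \<le> Suc j"
      and sel0: "SEL s (Suc j) (nodesU (nodes M j) d) e0 (ph s (Suc j) y0) t0 l0"
      using Suc.IH[OF we(2)] by blast
    let ?y = "cn w y0"
    let ?t = "t0 + 1 + nn j w"
    have yin: "?y \<in> ?N" using we(1) yl(1) by auto
    have Ww: "0 < om s j w" using reg_all[OF we(1)] by simp
    have selN: "SEL s (Suc j) ?N e (ph s (Suc j) ?y) ?t l0"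
      unfolding SEL_def
    proof (intro allI impI ballI)
      fix \<rho> :: "nat \<Rightarrow> real" and x
      assume r: "\<forall>n. ?t \<le> n \<longrightarrow> AA l0 / 2 \<le> \<rho> n \<and> \<rho> n \<le> AA l0" and x: "x \<in> ?N"
      show "(?t \<le> nn (Suc j) x \<and> (ph s (Suc j) x - ph s (Suc j) ?y)^2 \<le> (om s (Suc j) x)^2 * \<rho> (nn (Suc j) x)) \<longleftrightarrow> x \<in> e"
      proof (cases "x = rt")
        case True
        have "x \<notin> e" using True we(3) by auto
        then show ?thesis using True by simp
      next
        case False
        then obtain u x0 where ux: "u \<in> nodes M j" "x0 \<in> nodesU (nodes M j) d" "x = cn u x0"
          using nodesU_cases[OF x] by blast
        have Wu: "0 < om s j u" using reg_all[OF ux(1)] by simp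
        show ?thesis
        proof (cases "u = w")
          case True
          have mem: "x \<in> e \<longleftrightarrow> x0 \<in> e0" using we(3) ux(3) True by auto
          let ?r = "\<lambda>n. \<rho> (1 + nn j w + n)"
          have r': "\<forall>n. t0 \<le> n \<longrightarrow> AA l0 / 2 \<le> ?r n \<and> ?r n \<le> AA l0" using r by simp
          have i: "(t0 \<le> nn (Suc j) x0 \<and> (ph s (Suc j) x0 - ph s (Suc j) y0)^2 \<le> (om s (Suc j) x0)^2 * ?r (nn (Suc j) x0)) \<longleftrightarrow> x0 \<in> e0"
            using mp[OF sel0[unfolded SEL_def, THEN spec[where x="?r"]] r'] ux(2) by (rule bspec)
          have "(ph s (Suc j) x - ph s (Suc j) ?y)^2 \<le> (om s (Suc j) x)^2 * \<rho> (nn (Suc j) x)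
              \<longleftrightarrow> (ph s (Suc j) x0 - ph s (Suc j) y0)^2 \<le> (om s (Suc j) x0)^2 * ?r (nn (Suc j) x0)"
            using shift_same[OF Ww, of x0 y0] ux(3) True by (simp add: cn_vals)
          moreover have "?t \<le> nn (Suc j) x \<longleftrightarrow> t0 \<le> nn (Suc j) x0" using ux(3) True by (simp add: cn_vals)
          ultimately show ?thesis using i mem by simp
        next
          case uw: False
          have nm: "x \<notin> e" using we(3) ux(3) uw by auto
          have "\<not> (?t \<le> nn (Suc j) x \<and> (ph s (Suc j) x - ph s (Suc j) ?y)^2 \<le> (om s (Suc j) x)^2 * \<rho> (nn (Suc j) x))"
          proof
            assume a: "?t \<le> nn (Suc j) x \<and> (ph s (Suc j) x - ph s (Suc j) ?y)^2 \<le> (om s (Suc j) x)^2 * \<rho> (nn (Suc j) x)"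
            let ?B = "(ph s j w + om s j w * ph s (Suc j) y0 - ph s j u) / om s j u"
            have rb: "AA l0 / 2 \<le> \<rho> (nn (Suc j) x)" "\<rho> (nn (Suc j) x) \<le> AA l0" using r a by auto
            have r0: "0 \<le> \<rho> (nn (Suc j) x)" using rb AA_pos[of l0] by linarith
            have r1: "\<rho> (nn (Suc j) x) \<le> 1/4" using rb AA_le[OF yl(2)] by simp
            have g: "(ph s (Suc j) x0 - ?B)^2 \<le> (om s (Suc j) x0)^2 * \<rho> (nn (Suc j) x)"
              using a shift_eq[OF Wu, of x0 w y0] ux(3) by simp
            have sb: "sepc K s j (nn j w) (nn j u) ?B"
              using SU[unfolded SEP_def, rule_format, OF we(1) ux(1) _ Qoff_node[OF jK yl(1)]] uw by auto
            show False
            proof (cases "x0 = rt")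
              case True
              have "nn j u < nn j w \<or> 1 < \<bar>?B\<bar>" using sb unfolding sepc_def by blast
              then show False
              proof
                assume "nn j u < nn j w"
                then show False using a ux(3) True by (simp add: cn_vals)
              next
                assume "1 < \<bar>?B\<bar>"
                then have "\<not> (0 - ?B)^2 \<le> 1 * \<rho> (nn (Suc j) x)"
                  using excl_big[of 1 ?B "\<rho> (nn (Suc j) x)"] r1 by simp
                then show False using g True by simp
              qed
            next
              case False
              have nz: "notZ s (Suc j) ?B" using sb jK unfolding sepc_def by simp
              have rg: "qo (Suc j) \<le> ph s (Suc j) x0" "ph s (Suc j) x0 \<le> qo (Suc j) + s" "0 < om s (Suc j) x0" "om s (Suc j) x0 \<le> s"
                using reg_nr[OF ux(2) False] by auto
              show False using excl_nr[OF nz rg r0] r1 g by simp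
            qed
          qed
          then show ?thesis using nm by simp
        qed
      qed
    qed
    have "\<exists>t l. 1 \<le> l \<and> l \<le> Suc j \<and> SEL s (Suc j) ?N e (ph s (Suc j) ?y) t l"
      using selN yl(2,3) by (intro exI[of _ ?t] exI[of _ l0]) simp
    then show ?thesis using yin by blast
  qed
qed

lemma M_all: "j \<le> K \<Longrightarrow> \<forall>e\<in>edges M j. \<exists>y\<in>nodes M j. \<exists>t l. 1 \<le> l \<and> l \<le> j \<and> SEL s j (nodes M j) e (ph s j y) t l"
proof (induction j)
  case 0 then show ?case by simp
next
  case (Suc j)
  have jK: "Suc j \<le> K" using Suc.prems .
  have SU: "SEP K s j (nodes M j)" using sep_all jK by simp
  have EU: "\<forall>e\<in>edges M j. \<exists>y\<in>nodes M j. \<exists>t l. 1 \<le> l \<and> l \<le> j \<and> SEL s j (nodes M j) e (ph s j y) t l"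
    using Suc.IH jK by simp
  show ?case
  proof
    fix e assume "e \<in> edges M (Suc j)"
    then have "e \<in> paths (nodes M j) M \<or> e \<in> recs (nodes M j) (edges M j) M" by simp
    then show "\<exists>y\<in>nodes M (Suc j). \<exists>t l. 1 \<le> l \<and> l \<le> Suc j \<and> SEL s (Suc j) (nodes M (Suc j)) e (ph s (Suc j) y) t l"
    proof
      assume "e \<in> paths (nodes M j) M"
      then obtain y where y: "y \<in> nodesU (nodes M j) M" "SEL s (Suc j) (nodesU (nodes M j) M) e (ph s (Suc j) y) 0 (Suc j)"
        using MP[OF jK SU] by blast
      have "\<exists>t l. 1 \<le> l \<and> l \<le> Suc j \<and> SEL s (Suc j) (nodes M (Suc j)) e (ph s (Suc j) y) t l"
        using y(2) by (intro exI[of _ 0] exI[of _ "Suc j"]) simp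
      then show ?thesis using y(1) by auto
    next
      assume "e \<in> recs (nodes M j) (edges M j) M"
      then show ?thesis using MR[OF jK SU EU] by simp
    qed
  qed
qed

end

lemma ax_ne: "(1::5) \<noteq> 2" "(1::5) \<noteq> 3" "(1::5) \<noteq> 4" "(2::5) \<noteq> 3" "(2::5) \<noteq> 4" "(3::5) \<noteq> 4"
  by simp_all

definition v5 :: "real \<Rightarrow> real \<Rightarrow> real \<Rightarrow> real \<Rightarrow> real^5" where
  "v5 a1 a2 a3 a4 = a1 *\<^sub>R axis 1 1 + a2 *\<^sub>R axis 2 1 + a3 *\<^sub>R axis 3 1 + a4 *\<^sub>R axis 4 1"

lemma inner_v5: "inner (v5 a1 a2 a3 a4) (v5 b1 b2 b3 b4) = a1*b1 + a2*b2 + a3*b3 + a4*b4"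
  unfolding v5_def using ax_ne
  by (simp add: inner_add_left inner_add_right inner_axis_axis algebra_simps)

lemma v5_inj: "v5 a1 a2 a3 a4 = v5 b1 b2 b3 b4 \<Longrightarrow> a1 = b1"
proof -
  assume "v5 a1 a2 a3 a4 = v5 b1 b2 b3 b4"
  then have "inner (v5 a1 a2 a3 a4) (v5 1 0 0 0) = inner (v5 b1 b2 b3 b4) (v5 1 0 0 0)" by simp
  then show ?thesis by (simp add: inner_v5)
qed

context cfg
begin

lemma ph_inj: "j \<le> K \<Longrightarrow> x \<in> nodes M j \<Longrightarrow> x' \<in> nodes M j \<Longrightarrow> ph s j x = ph s j x' \<Longrightarrow> x = x'"
proof (rule ccontr)
  assume j: "j \<le> K" and x: "x \<in> nodes M j" and x': "x' \<in> nodes M j" and eq: "ph s j x = ph s j x'" and ne: "x \<noteq> x'"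
  have q0: "Qoff K s j 0" unfolding Qoff_def by simp
  have "sepc K s j (nn j x) (nn j x') ((ph s j x + om s j x * 0 - ph s j x') / om s j x')"
    using sep_all[OF j, of M, unfolded SEP_def, rule_format, OF x x' ne q0] .
  then have "2 * qo (Suc j) < 0" using eq unfolding sepc_def by simp
  then show False using oo_pos[of "Suc j"] by simp
qed

lemma rho_props:
  fixes A :: real and t n :: nat
  assumes A: "0 < A"
  defines "r \<equiv> A - A / 2 * (4::real)^t * (1/4)^n"
  shows "t \<le> n \<Longrightarrow> A / 2 \<le> r \<and> r \<le> A" and "n < t \<Longrightarrow> r < 0"
proof -
  have inv: "(4::real)^i * (1/4)^i = 1" for i :: nat
    by (simp add: power_mult_distrib[symmetric])
  {
    assume tn: "t \<le> n"
    have "n = t + (n - t)" using tn by simp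
    then have "(1/4::real)^n = (1/4)^t * (1/4)^(n-t)" by (metis power_add)
    then have q: "(4::real)^t * (1/4)^n = (1/4)^(n - t)" using inv[of t] by (simp add: mult.assoc[symmetric])
    have q1: "(1/4::real)^(n - t) \<le> 1" by (rule power_le_one) auto
    have q0: "0 \<le> (1/4::real)^(n - t)" by simp
    have "A / 2 * (4::real)^t * (1/4)^n = A / 2 * (1/4)^(n - t)" using q by (simp add: mult.assoc)
    moreover have "A / 2 * (1/4::real)^(n - t) \<le> A / 2 * 1" using q1 A by (intro mult_left_mono) auto
    moreover have "0 \<le> A / 2 * (1/4::real)^(n - t)" using q0 A by simp
    ultimately show "A / 2 \<le> r \<and> r \<le> A" unfolding r_def by linarith
  next
    assume nt: "n < t"
    have "t = n + (t - n)" using nt by simp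
    then have "(4::real)^t = 4^n * 4^(t-n)" by (metis power_add)
    then have q: "(4::real)^t * (1/4)^n = 4^(t - n)" using inv[of n] by (simp add: mult.commute mult.left_commute)
    have "(4::real)^1 \<le> 4^(t - n)" using nt by (intro power_increasing) auto
    then have q4: "4 \<le> (4::real)^(t - n)" by simp
    have "A / 2 * (4::real)^t * (1/4)^n = A / 2 * 4^(t - n)" using q by (simp add: mult.assoc)
    moreover have "A / 2 * 4 \<le> A / 2 * (4::real)^(t - n)" using q4 A by (intro mult_left_mono) auto
    ultimately show "r < 0" unfolding r_def using A by linarith
  }
qed

end

theorem mainTheorem9:
  fixes k m :: nat
  assumes "k > 0" and "m > 0"
  shows "\<exists>P :: (real^5) set. finite P \<and>
           (\<forall>c :: real^5 \<Rightarrow> nat. (\<forall>x\<in>P. c x < k) \<longrightarrow>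
              (\<exists>H. halfspace H \<and> card (H \<inter> P) \<ge> m \<and>
                   (\<exists>i. \<forall>x\<in>H \<inter> P. c x = i)))"
proof -
  define s where "s = qo k / 100"
  define M where "M = m - 1"
  interpret cfg k s
    by unfold_locales (auto simp: s_def oo_pos)
  define N where "N = nodes M k"
  define vec where "vec x = v5 (ph s k x) ((ph s k x)^2) ((om s k x)^2) ((om s k x)^2 * (1/4)^(nn k x))" for x
  have injv: "inj_on vec N"
  proof (rule inj_onI)
    fix x x' assume "x \<in> N" "x' \<in> N" "vec x = vec x'"
    then show "x = x'" using ph_inj[of k x M x'] v5_inj unfolding vec_def N_def by auto
  qed
  have finN: "finite N" unfolding N_def by (rule finite_nodes)
  show ?thesis
  proof (rule exI[of _ "vec ` N"], intro conjI allI impI)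
    show "finite (vec ` N)" using finN by simp
  next
    fix c :: "real^5 \<Rightarrow> nat"
    assume c: "\<forall>x\<in>vec ` N. c x < k"
    let ?col = "c \<circ> vec"
    have "?col ` nodes M k \<subseteq> {..<k}" using c unfolding N_def by auto
    then obtain e i where e: "e \<in> edges M k" "\<forall>x\<in>e. ?col x = i"
      using ramsey[of "{..<k}" k ?col M] by auto
    obtain y t l where yl: "y \<in> N" "1 \<le> l" "l \<le> k" and sel: "SEL s k N e (ph s k y) t l"
      using M_all[of k M] e(1) unfolding N_def by blast
    have eN: "e \<subseteq> N" using edges_sub[OF e(1)] unfolding N_def .
    have ce: "card e = m" using card_edges[OF e(1)] assms(2) unfolding M_def by simp
    define tq where "tq = ph s k y"
    define A where "A = AA l"
    have A0: "0 < A" unfolding A_def by (rule AA_pos)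
    define a where "a = v5 (- 2 * tq) 1 (- A) (A / 2 * 4^t)"
    define H where "H = {z. inner a z \<le> - (tq^2)}"
    have hs: "halfspace H"
    proof -
      have "a \<noteq> 0"
      proof
        assume "a = 0"
        then have "inner a (v5 0 1 0 0) = 0" by simp
        then show False unfolding a_def by (simp add: inner_v5)
      qed
      then show ?thesis unfolding halfspace_def H_def by blast
    qed
    define \<rho> where "\<rho> n = A - A / 2 * (4::real)^t * (1/4)^n" for n
    have rr: "\<forall>n. t \<le> n \<longrightarrow> AA l / 2 \<le> \<rho> n \<and> \<rho> n \<le> AA l"
      using rho_props(1)[OF A0] unfolding \<rho>_def A_def by blast
    have key: "vec x \<in> H \<longleftrightarrow> x \<in> e" if x: "x \<in> N" for x
    proof -
      let ?p = "ph s k x" let ?w = "om s k x" let ?n = "nn k x"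
      have w0: "0 < ?w" using reg_all[of x M k] x unfolding N_def by simp
      have "vec x \<in> H \<longleftrightarrow> (?p - tq)^2 \<le> ?w^2 * \<rho> ?n"
        unfolding H_def vec_def a_def \<rho>_def by (simp add: inner_v5 power2_eq_square algebra_simps)
      also have "\<dots> \<longleftrightarrow> (t \<le> ?n \<and> (?p - tq)^2 \<le> ?w^2 * \<rho> ?n)"
      proof (cases "t \<le> ?n")
        case True then show ?thesis by simp
      next
        case False
        then have "\<rho> ?n < 0" using rho_props(2)[OF A0, of ?n t] unfolding \<rho>_def by simp
        then have "?w^2 * \<rho> ?n < 0" using w0 by (simp add: mult_pos_neg)
        then show ?thesis using False by (smt (verit) zero_le_power2)
      qed
      also have "\<dots> \<longleftrightarrow> x \<in> e"
        using mp[OF sel[unfolded SEL_def, THEN spec[where x=\<rho>]] rr] x unfolding tq_def by (rule bspec)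
      finally show ?thesis .
    qed
    have HP: "H \<inter> vec ` N = vec ` e"
    proof
      show "H \<inter> vec ` N \<subseteq> vec ` e" using key by auto
      show "vec ` e \<subseteq> H \<inter> vec ` N" using key eN by auto
    qed
    have "card (H \<inter> vec ` N) = m"
      unfolding HP using card_image[OF inj_on_subset[OF injv eN]] ce by simp
    moreover have "\<forall>z\<in>H \<inter> vec ` N. c z = i" unfolding HP using e(2) by auto
    ultimately show "\<exists>H. halfspace H \<and> m \<le> card (H \<inter> vec ` N) \<and> (\<exists>i. \<forall>x\<in>H \<inter> vec ` N. c x = i)"
      using hs by auto
  qed
qed

end
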